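(* Assume the standing assumptions and fix a function $h$ satisfying (h1)–(h4). Let $\tau=\min\{n\ge1:S_n\le0\}$. Suppose there is a stopping time $\sigma$ (with respect to an admissible filtration) such that $\mathbf P(\sigma>0)>0$, $\mathbf P(S_\sigma\le0)=1$ and $\lim_{x\to\infty}\delta_\sigma(x)=0$. Then $\lim_{x\to\infty}\delta_\tau(x)=0$.
   Context: Standing assumptions: $\{\xi_n\}_{n\ge1}$ are i.i.d. real random variables with common distribution function $F$ and finite mean $\mathbf E\xi_1=-m<0$. $F$ is long-tailed: $\overline F(x)=1-F(x)>0$ for all $x$, and $\overline F(x-c)/\overline F(x)\to1$ as $x\to\infty$ for every fixed $c>0$. Notation: $S_0=0$ and $S_n=\sum_{i=1}^n\xi_i$. Admissible filtration: stopping times are taken with respect to a filtration $\{\mathcal F_n\}_{n\ge0}$ such that $\xi_n$ is $\mathcal F_n$-measurable and $\xi_{n+1}$ is independent of $\mathcal F_n$. The function $h:\mathbb R_+\to\mathbb R_+$ satisfies: - (h1) $h(x)\le x/2$; - (h2) $h(x)\to\infty$; - (h3) $\overline F(x-h(x))/\overline F(x)\to1$ as $x\to\infty$; - (h4) there exists $x_0$ with $h(x+t)\le h(x)+t$ for all $x\ge x_0$, $t\ge0$. For $x\ge0$, let $\mu(x)=\min\{n:S_n>x\}$, with $\min\emptyset=\infty$. For a stopping time $\sigma$, define $$A_{\sigma,2}(x)=\{\mu(x)\le\sigma,\ S_{\mu(x)-1}>h(x)\},\qquad \delta_\sigma(x)=\sup_{y\ge x}\frac{\mathbf P(A_{\sigma,2}(y))}{\overline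 F(y)}.$$ *)

theory Defs
  imports "HOL-Probability.Probability"
begin

text \<open>Random walk S_0 = 0, S_n = xi_1 + ... + xi_n (xi_0 is unused).\<close>
definition rw :: "(nat \<Rightarrow> 'a \<Rightarrow> real) \<Rightarrow> nat \<Rightarrow> 'a \<Rightarrow> real" where
  "rw \<xi> n \<omega> = (\<Sum>i\<in>{1..n}. \<xi> i \<omega>)"

definition distF :: "'a measure \<Rightarrow> (nat \<Rightarrow> 'a \<Rightarrow> real) \<Rightarrow> real \<Rightarrow> real" where
  "distF M \<xi> x = measure M {\<omega> \<in> space M. \<xi> 1 \<omega> \<le> x}"

definition tailF :: "'a measure \<Rightarrow> (nat \<Rightarrow> 'a \<Rightarrow> real) \<Rightarrow> real \<Rightarrow> real" where
  "tailF M \<xi> x = 1 - distF M \<xi> x"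

definition mu :: "(nat \<Rightarrow> 'a \<Rightarrow> real) \<Rightarrow> real \<Rightarrow> 'a \<Rightarrow> enat" where
  "mu \<xi> x \<omega> = (if \<exists>n. rw \<xi> n \<omega> > x then enat (LEAST n. rw \<xi> n \<omega> > x) else \<infinity>)"

definition tau :: "(nat \<Rightarrow> 'a \<Rightarrow> real) \<Rightarrow> 'a \<Rightarrow> enat" where
  "tau \<xi> \<omega> = (if \<exists>n\<ge>1. rw \<xi> n \<omega> \<le> 0 then enat (LEAST n. n \<ge> 1 \<and> rw \<xi> n \<omega> \<le> 0) else \<infinity>)"

definition A2 :: "'a measure \<Rightarrow> (nat \<Rightarrow> 'a \<Rightarrow> real) \<Rightarrow> (real \<Rightarrow> real) \<Rightarrow> ('a \<Rightarrow> enat) \<Rightarrow> real \<Rightarrow> 'a set" where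
  "A2 M \<xi> h \<sigma> x = {\<omega> \<in> space M. \<exists>n. mu \<xi> x \<omega> = enat n \<and> enat n \<le> \<sigma> \<omega> \<and> rw \<xi> (n - 1) \<omega> > h x}"

definition delta :: "'a measure \<Rightarrow> (nat \<Rightarrow> 'a \<Rightarrow> real) \<Rightarrow> (real \<Rightarrow> real) \<Rightarrow> ('a \<Rightarrow> enat) \<Rightarrow> real \<Rightarrow> ereal" where
  "delta M \<xi> h \<sigma> x = (SUP y\<in>{x..}. ereal (measure M (A2 M \<xi> h \<sigma> y) / tailF M \<xi> y))"

definition admissible_filtration :: "'a measure \<Rightarrow> (nat \<Rightarrow> 'a measure) \<Rightarrow> (nat \<Rightarrow> 'a \<Rightarrow> real) \<Rightarrow> bool" where
  "admissible_filtration M F \<xi> \<longleftrightarrow>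
     (\<forall>n. subalgebra M (F n)) \<and>
     (\<forall>n. sets (F n) \<subseteq> sets (F (Suc n))) \<and>
     (\<forall>n\<ge>1. \<xi> n \<in> borel_measurable (F n)) \<and>
     (\<forall>n. \<forall>A\<in>sets (F n). \<forall>B\<in>sets borel.
        measure M (A \<inter> (\<xi> (Suc n) -` B \<inter> space M)) =
        measure M A * measure M (\<xi> (Suc n) -` B \<inter> space M))"

definition stopping_time_wrt :: "'a measure \<Rightarrow> (nat \<Rightarrow> 'a measure) \<Rightarrow> ('a \<Rightarrow> enat) \<Rightarrow> bool" where
  "stopping_time_wrt M F \<sigma> \<longleftrightarrow> (\<forall>n::nat. {\<omega> \<in> space M. \<sigma> \<omega> \<le> enat n} \<in> sets (F n))"

end

theory Submission
  imports Defs
begin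

definition Cset :: "'a measure \<Rightarrow> (nat \<Rightarrow> 'a \<Rightarrow> real) \<Rightarrow> nat \<Rightarrow> (nat \<Rightarrow> real set) \<Rightarrow> 'a set" where
  "Cset M \<xi> n B = space M \<inter> (\<Inter>k\<in>{1..n}. \<xi> k -` B k)"

lemma Cset_Suc: "Cset M \<xi> (Suc n) B = Cset M \<xi> n B \<inter> (\<xi> (Suc n) -` B (Suc n) \<inter> space M)"
  unfolding Cset_def by (auto simp: atLeastAtMostSuc_conv)

lemma Cset_0: "Cset M \<xi> 0 B = space M"
  unfolding Cset_def by auto

lemma adm_mono:
  assumes adm: "admissible_filtration M F \<xi>" and "m \<le> n"
  shows "sets (F m) \<subseteq> sets (F n)"
  using assms(2)
proof (induction n)
  case 0 then show ?case by simp
next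
  case (Suc n)
  show ?case
  proof (cases "m = Suc n")
    case True then show ?thesis by simp
  next
    case False
    then have "m \<le> n" using Suc by simp
    then show ?thesis using Suc adm unfolding admissible_filtration_def by blast
  qed
qed

lemma adm_space:
  assumes adm: "admissible_filtration M F \<xi>"
  shows "space (F n) = space M" "sets (F n) \<subseteq> sets M"
  using adm unfolding admissible_filtration_def subalgebra_def by auto

lemma Cset_sets:
  assumes adm: "admissible_filtration M F \<xi>" and B: "\<And>k. B k \<in> sets borel"
  shows "Cset M \<xi> n B \<in> sets (F n)"
proof (induction n)
  case 0
  have "space (F 0) \<in> sets (F 0)" by simp
  then show ?case using adm_space[OF adm] by (simp add: Cset_0)
next
  case (Suc n)
  have m: "\<xi> (Suc n) \<in> borel_measurable (F (Suc n))"
    using adm unfolding admissible_filtration_def by auto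
  have "\<xi> (Suc n) -` B (Suc n) \<inter> space (F (Suc n)) \<in> sets (F (Suc n))"
    using measurable_sets[OF m B] .
  moreover have "Cset M \<xi> n B \<in> sets (F (Suc n))"
    using Suc adm_mono[OF adm, of n "Suc n"] by auto
  ultimately show ?case unfolding Cset_Suc using adm_space[OF adm] by auto
qed

lemma Cset_indep:
  assumes P: "prob_space M" and adm: "admissible_filtration M F \<xi>" and B: "\<And>k. B k \<in> sets borel"
  shows "\<forall>A\<in>sets (F 0). measure M (A \<inter> Cset M \<xi> n B) = measure M A * measure M (Cset M \<xi> n B)"
proof (induction n)
  case 0
  show ?case
  proof
    fix A assume "A \<in> sets (F 0)"
    then have "A \<subseteq> space M" using adm_space[OF adm] sets.sets_into_space by blast
    then show "measure M (A \<inter> Cset M \<xi> 0 B) = measure M A * measure M (Cset M \<xi> 0 B)"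
      using prob_space.prob_space[OF P] by (simp add: Cset_0 Int_absorb2)
  qed
next
  case (Suc n)
  have ind: "\<And>A. A \<in> sets (F n) \<Longrightarrow> measure M (A \<inter> (\<xi> (Suc n) -` B (Suc n) \<inter> space M)) =
        measure M A * measure M (\<xi> (Suc n) -` B (Suc n) \<inter> space M)"
    using adm B unfolding admissible_filtration_def by blast
  have Cn: "Cset M \<xi> n B \<in> sets (F n)" using Cset_sets[OF adm B] .
  have sp: "space M \<in> sets (F 0)" using adm_space[OF adm] sets.top by metis
  show ?case
  proof
    fix A assume A: "A \<in> sets (F 0)"
    have A': "A \<in> sets (F n)" using A adm_mono[OF adm, of 0 n] by auto
    have "A \<inter> Cset M \<xi> n B \<in> sets (F n)" using A' Cn by auto
    from ind[OF this] have "measure M (A \<inter> Cset M \<xi> (Suc n) B) =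
       measure M (A \<inter> Cset M \<xi> n B) * measure M (\<xi> (Suc n) -` B (Suc n) \<inter> space M)"
      unfolding Cset_Suc by (simp add: Int_assoc)
    also have "\<dots> = measure M A * (measure M (Cset M \<xi> n B) * measure M (\<xi> (Suc n) -` B (Suc n) \<inter> space M))"
      using Suc A by simp
    also have "measure M (Cset M \<xi> n B) * measure M (\<xi> (Suc n) -` B (Suc n) \<inter> space M) = measure M (Cset M \<xi> (Suc n) B)"
      using ind[OF Cn] unfolding Cset_Suc by simp
    finally show "measure M (A \<inter> Cset M \<xi> (Suc n) B) = measure M A * measure M (Cset M \<xi> (Suc n) B)" .
  qed
qed

definition Gen :: "'a measure \<Rightarrow> (nat \<Rightarrow> 'a \<Rightarrow> real) \<Rightarrow> 'a set set" where
  "Gen M \<xi> = {Cset M \<xi> n B | n B. \<forall>k. B k \<in> sets borel}"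

lemma Gen_Int_stable: "Int_stable (Gen M \<xi>)"
proof (rule Int_stableI)
  fix a b assume "a \<in> Gen M \<xi>" "b \<in> Gen M \<xi>"
  then obtain n1 B1 n2 B2 where a: "a = Cset M \<xi> n1 B1" "\<forall>k. B1 k \<in> sets borel"
     and b: "b = Cset M \<xi> n2 B2" "\<forall>k. B2 k \<in> sets borel" unfolding Gen_def by blast
  define B where "B k = (if k \<le> n1 then B1 k else UNIV) \<inter> (if k \<le> n2 then B2 k else UNIV)" for k
  have "\<forall>k. B k \<in> sets borel" using a b unfolding B_def by auto
  moreover have "a \<inter> b = Cset M \<xi> (max n1 n2) B"
    unfolding a b Cset_def B_def by (auto split: if_splits)
  ultimately show "a \<inter> b \<in> Gen M \<xi>" unfolding Gen_def by blast
qed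

lemma indep_F0:
  assumes P: "prob_space M" and adm: "admissible_filtration M F \<xi>"
    and A: "A \<in> sets (F 0)" and E: "E \<in> sigma_sets (space M) (Gen M \<xi>)"
  shows "measure M (A \<inter> E) = measure M A * measure M E"
proof -
  interpret prob_space M by fact
  have Gev: "Gen M \<xi> \<subseteq> events"
    unfolding Gen_def using Cset_sets[OF adm] adm_space[OF adm] by blast
  have Aev: "A \<in> events" using A adm_space[OF adm] by blast
  have "indep_set {A} (Gen M \<xi>)"
    unfolding indep_sets2_eq using Gev Aev Cset_indep[OF P adm] A unfolding Gen_def by auto
  then have "indep_set (sigma_sets (space M) {A}) (sigma_sets (space M) (Gen M \<xi>))"
    by (rule indep_set_sigma_sets[OF _ _ Gen_Int_stable]) (auto simp: Int_stable_def)
  from indep_setD[OF this _ E] show ?thesis by (auto intro: sigma_sets.Basic)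
qed


lemma mu_eq: "mu \<xi> x \<omega> = enat n \<longleftrightarrow> (rw \<xi> n \<omega> > x \<and> (\<forall>k<n. rw \<xi> k \<omega> \<le> x))"
proof (cases "\<exists>n. rw \<xi> n \<omega> > x")
  case True
  then have m: "mu \<xi> x \<omega> = enat (LEAST n. rw \<xi> n \<omega> > x)" unfolding mu_def by simp
  show ?thesis
  proof
    assume "mu \<xi> x \<omega> = enat n"
    then have n: "n = (LEAST n. rw \<xi> n \<omega> > x)" using m by simp
    show "rw \<xi> n \<omega> > x \<and> (\<forall>k<n. rw \<xi> k \<omega> \<le> x)"
      using LeastI_ex[OF True] not_less_Least n by (metis not_le)
  next
    assume a: "rw \<xi> n \<omega> > x \<and> (\<forall>k<n. rw \<xi> k \<omega> \<le> x)"
    then have "(LEAST n. rw \<xi> n \<omega> > x) = n"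
      by (intro Least_equality) (auto simp: not_less[symmetric])
    then show "mu \<xi> x \<omega> = enat n" using m by simp
  qed
next
  case False
  then show ?thesis unfolding mu_def by auto
qed

lemma tau_ge: "enat n \<le> tau \<xi> \<omega> \<longleftrightarrow> (\<forall>k. 1 \<le> k \<and> k < n \<longrightarrow> rw \<xi> k \<omega> > 0)"
proof (cases "\<exists>n\<ge>1. rw \<xi> n \<omega> \<le> 0")
  case True
  then have t: "tau \<xi> \<omega> = enat (LEAST n. n \<ge> 1 \<and> rw \<xi> n \<omega> \<le> 0)" unfolding tau_def by simp
  have ex: "\<exists>n. n \<ge> 1 \<and> rw \<xi> n \<omega> \<le> 0" using True by blast
  show ?thesis
  proof
    assume "enat n \<le> tau \<xi> \<omega>"
    then have le: "n \<le> (LEAST n. n \<ge> 1 \<and> rw \<xi> n \<omega> \<le> 0)" using t by simp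
    show "\<forall>k. 1 \<le> k \<and> k < n \<longrightarrow> rw \<xi> k \<omega> > 0"
    proof (intro allI impI)
      fix k assume k: "1 \<le> k \<and> k < n"
      show "rw \<xi> k \<omega> > 0"
      proof (rule ccontr)
        assume "\<not> rw \<xi> k \<omega> > 0"
        then have "(LEAST n. n \<ge> 1 \<and> rw \<xi> n \<omega> \<le> 0) \<le> k" using k by (intro Least_le) auto
        then show False using le k by simp
      qed
    qed
  next
    assume a: "\<forall>k. 1 \<le> k \<and> k < n \<longrightarrow> rw \<xi> k \<omega> > 0"
    have "n \<le> (LEAST n. n \<ge> 1 \<and> rw \<xi> n \<omega> \<le> 0)"
      using LeastI_ex[OF ex] a by (metis not_le not_less)
    then show "enat n \<le> tau \<xi> \<omega>" using t by simp
  qed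
next
  case False
  then show ?thesis unfolding tau_def by auto
qed

lemma A2_eq: "A2 M \<xi> h s x = {\<omega> \<in> space M. \<exists>n. rw \<xi> n \<omega> > x \<and> (\<forall>k\<in>{..<n}. rw \<xi> k \<omega> \<le> x) \<and> enat n \<le> s \<omega> \<and> rw \<xi> (n - 1) \<omega> > h x}"
  unfolding A2_def mu_eq by auto

lemma xi_N:
  assumes "k \<ge> 1"
  shows "\<xi> k \<in> borel_measurable (sigma (space M) (Gen M \<xi>))"
proof -
  have G: "Gen M \<xi> \<subseteq> Pow (space M)" unfolding Gen_def Cset_def by auto
  show ?thesis
  proof (rule measurableI)
    fix A :: "real set" assume A: "A \<in> sets borel"
    define B where "B j = (if j = k then A else UNIV)" for j
    have "\<forall>j. B j \<in> sets borel" using A unfolding B_def by auto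
    moreover have "\<xi> k -` A \<inter> space (sigma (space M) (Gen M \<xi>)) = Cset M \<xi> k B"
      using assms G unfolding Cset_def B_def by (auto split: if_splits)
    ultimately have "\<xi> k -` A \<inter> space (sigma (space M) (Gen M \<xi>)) \<in> Gen M \<xi>"
      unfolding Gen_def by blast
    then show "\<xi> k -` A \<inter> space (sigma (space M) (Gen M \<xi>)) \<in> sets (sigma (space M) (Gen M \<xi>))"
      using G by (simp add: sigma_sets.Basic)
  qed auto
qed

lemma rw_N: "rw \<xi> n \<in> borel_measurable (sigma (space M) (Gen M \<xi>))"
proof -
  have "(\<lambda>\<omega>. \<Sum>i\<in>{1..n}. \<xi> i \<omega>) \<in> borel_measurable (sigma (space M) (Gen M \<xi>))"
    by (rule borel_measurable_sum) (auto intro: xi_N)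
  then show ?thesis unfolding rw_def[abs_def] .
qed

lemma tau_set_N: "A2 M \<xi> h (tau \<xi>) x \<in> sigma_sets (space M) (Gen M \<xi>)"
proof -
  have G: "Gen M \<xi> \<subseteq> Pow (space M)" unfolding Gen_def Cset_def by auto
  note [measurable] = rw_N
  have "Measurable.pred (sigma (space M) (Gen M \<xi>)) (\<lambda>\<omega>. \<exists>n::nat. rw \<xi> n \<omega> > x \<and> (\<forall>k\<in>{..<n}. rw \<xi> k \<omega> \<le> x) \<and> (\<forall>k\<in>{1..<n}. rw \<xi> k \<omega> > 0) \<and> rw \<xi> (n - 1) \<omega> > h x)"
    by measurable
  then have "{\<omega> \<in> space (sigma (space M) (Gen M \<xi>)). \<exists>n. rw \<xi> n \<omega> > x \<and> (\<forall>k\<in>{..<n}. rw \<xi> k \<omega> \<le> x) \<and> (\<forall>k\<in>{1..<n}. rw \<xi> k \<omega> > 0) \<and> rw \<xi> (n - 1) \<omega> > h x} \<in> sets (sigma (space M) (Gen M \<xi>))"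
    unfolding pred_def .
  moreover have "A2 M \<xi> h (tau \<xi>) x = {\<omega> \<in> space (sigma (space M) (Gen M \<xi>)). \<exists>n. rw \<xi> n \<omega> > x \<and> (\<forall>k\<in>{..<n}. rw \<xi> k \<omega> \<le> x) \<and> (\<forall>k\<in>{1..<n}. rw \<xi> k \<omega> > 0) \<and> rw \<xi> (n - 1) \<omega> > h x}"
    unfolding A2_eq tau_ge using G by auto
  ultimately show ?thesis using G by simp
qed

lemma sigma_set_M:
  assumes adm: "admissible_filtration M F \<xi>" and stop: "stopping_time_wrt M F s"
  shows "A2 M \<xi> h s x \<in> sets M"
proof -
  have xm: "k \<ge> 1 \<Longrightarrow> \<xi> k \<in> borel_measurable M" for k
  proof -
    assume k: "k \<ge> 1"
    have "subalgebra M (F k)" "\<xi> k \<in> borel_measurable (F k)"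
      using adm k unfolding admissible_filtration_def by auto
    then show ?thesis by (rule measurable_from_subalg)
  qed
  have rwm[measurable]: "rw \<xi> n \<in> borel_measurable M" for n
  proof -
    have "(\<lambda>\<omega>. \<Sum>i\<in>{1..n}. \<xi> i \<omega>) \<in> borel_measurable M"
      by (rule borel_measurable_sum) (auto intro: xm)
    then show ?thesis unfolding rw_def[abs_def] .
  qed
  have sm[measurable]: "Measurable.pred M (\<lambda>\<omega>. s \<omega> \<le> enat m)" for m
  proof -
    have "{\<omega> \<in> space M. s \<omega> \<le> enat m} \<in> sets (F m)"
      using stop unfolding stopping_time_wrt_def by simp
    then show ?thesis using adm_space(2)[OF adm, of m] unfolding pred_def by (rule subsetD[rotated])
  qed
  have "Measurable.pred M (\<lambda>\<omega>. \<exists>n::nat. rw \<xi> n \<omega> > x \<and> (\<forall>k\<in>{..<n}. rw \<xi> k \<omega> \<le> x) \<and> (n = 0 \<or> \<not> s \<omega> \<le> enat (n - 1)) \<and> rw \<xi> (n - 1) \<omega> > h x)"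
    by measurable
  then have "{\<omega> \<in> space M. \<exists>n. rw \<xi> n \<omega> > x \<and> (\<forall>k\<in>{..<n}. rw \<xi> k \<omega> \<le> x) \<and> (n = 0 \<or> \<not> s \<omega> \<le> enat (n - 1)) \<and> rw \<xi> (n - 1) \<omega> > h x} \<in> sets M"
    unfolding pred_def .
  moreover have "\<And>n \<omega>. enat n \<le> s \<omega> \<longleftrightarrow> (n = 0 \<or> \<not> s \<omega> \<le> enat (n - 1))"
  proof -
    fix n \<omega>
    show "enat n \<le> s \<omega> \<longleftrightarrow> (n = 0 \<or> \<not> s \<omega> \<le> enat (n - 1))"
    proof (cases n)
      case 0 then show ?thesis by (simp add: zero_enat_def[symmetric])
    next
      case (Suc m)
      then show ?thesis by (auto simp: Suc_ile_eq not_le)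
    qed
  qed
  ultimately show ?thesis unfolding A2_eq by simp
qed

theorem lemma4:
  fixes M :: "'a measure" and \<xi> :: "nat \<Rightarrow> 'a \<Rightarrow> real" and h :: "real \<Rightarrow> real"
    and F :: "nat \<Rightarrow> 'a measure" and \<sigma> :: "'a \<Rightarrow> enat"
  assumes "prob_space M"
    and meas: "\<And>n. \<xi> n \<in> borel_measurable M"
    and indep: "prob_space.indep_vars M (\<lambda>_. borel) \<xi> {1..}"
    and ident: "\<And>n. n \<ge> 1 \<Longrightarrow> distr M borel (\<xi> n) = distr M borel (\<xi> 1)"
    and integr: "integrable M (\<xi> 1)"
    and neg_mean: "integral\<^sup>L M (\<xi> 1) < 0"
    and tail_pos: "\<And>x. tailF M \<xi> x > 0"
    and long_tailed: "\<And>c. c > 0 \<Longrightarrow> ((\<lambda>x. tailF M \<xi> (x - c) / tailF M \<xi> x) \<longlongrightarrow> 1) at_top"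
    and h_nonneg: "\<And>x. x \<ge> 0 \<Longrightarrow> h x \<ge> 0"
    and h1: "\<And>x. x \<ge> 0 \<Longrightarrow> h x \<le> x / 2"
    and h2: "filterlim h at_top at_top"
    and h3: "((\<lambda>x. tailF M \<xi> (x - h x) / tailF M \<xi> x) \<longlongrightarrow> 1) at_top"
    and h4: "\<exists>x0. \<forall>x\<ge>x0. \<forall>t\<ge>0. h (x + t) \<le> h x + t"
    and adm: "admissible_filtration M F \<xi>"
    and stop: "stopping_time_wrt M F \<sigma>"
    and sigma_pos: "measure M {\<omega> \<in> space M. \<sigma> \<omega> > 0} > 0"
    and sigma_neg: "measure M {\<omega> \<in> space M. \<exists>n. \<sigma> \<omega> = enat n \<and> rw \<xi> n \<omega> \<le> 0} = 1"
    and delta_sigma: "(delta M \<xi> h \<sigma> \<longlongrightarrow> 0) at_top"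
  shows "(delta M \<xi> h (tau \<xi>) \<longlongrightarrow> 0) at_top"
proof -
  interpret prob_space M by fact
  define S where "S = {\<omega> \<in> space M. \<sigma> \<omega> > 0}"
  have S0: "S = space (F 0) - {\<omega> \<in> space M. \<sigma> \<omega> \<le> enat 0}"
    unfolding S_def adm_space[OF adm] by (auto simp: zero_enat_def[symmetric])
  have SF: "S \<in> sets (F 0)"
    unfolding S0 using stop unfolding stopping_time_wrt_def by (intro sets.Diff) auto
  define p where "p = prob S"
  have p: "p > 0" using sigma_pos unfolding p_def S_def .
  define G where "G = {\<omega> \<in> space M. \<exists>n. \<sigma> \<omega> = enat n \<and> rw \<xi> n \<omega> \<le> 0}"
  have PG: "prob G = 1" using sigma_neg unfolding G_def .
  then have Gev: "G \<in> events" using measure_notin_sets by fastforce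
  have nG: "prob (space M - G) = 0" using prob_compl[OF Gev] PG by simp
  have key: "prob (A2 M \<xi> h (tau \<xi>) y) * p \<le> prob (A2 M \<xi> h \<sigma> y)" for y
  proof -
    let ?E = "A2 M \<xi> h (tau \<xi>) y" and ?A = "A2 M \<xi> h \<sigma> y"
    have Eev: "?E \<in> events"
    proof -
      have G: "Gen M \<xi> \<subseteq> Pow (space M)" unfolding Gen_def Cset_def by auto
      have "Gen M \<xi> \<subseteq> events"
        unfolding Gen_def using Cset_sets[OF adm] adm_space[OF adm] by blast
      from sets.sigma_sets_subset[OF this] show ?thesis using tau_set_N[of M \<xi> h y] by blast
    qed
    have Aev: "?A \<in> events" using sigma_set_M[OF adm stop] .
    have eq: "prob (S \<inter> ?E) = p * prob ?E" unfolding p_def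
      by (rule indep_F0[OF \<open>prob_space M\<close> adm SF tau_set_N])
    have incl: "S \<inter> ?E \<subseteq> ?A \<union> (space M - G)"
    proof
      fix \<omega> assume w: "\<omega> \<in> S \<inter> ?E"
      show "\<omega> \<in> ?A \<union> (space M - G)"
      proof (cases "\<omega> \<in> G")
        case True
        then obtain m where m: "\<sigma> \<omega> = enat m" "rw \<xi> m \<omega> \<le> 0" unfolding G_def by auto
        have "m \<ge> 1" using w m unfolding S_def by (auto simp: zero_enat_def)
        then have ex: "\<exists>n\<ge>1. rw \<xi> n \<omega> \<le> 0" using m by auto
        have "tau \<xi> \<omega> \<le> enat m"
          unfolding tau_def using ex \<open>m \<ge> 1\<close> m by (auto intro!: Least_le)
        then have "tau \<xi> \<omega> \<le> \<sigma> \<omega>" using m by simp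
        then show ?thesis using w unfolding A2_def by (auto intro: order_trans)
      next
        case False then show ?thesis using w unfolding S_def by auto
      qed
    qed
    from incl have "prob (S \<inter> ?E) \<le> prob (?A \<union> (space M - G))"
      using Aev Gev by (intro finite_measure_mono) auto
    also have "\<dots> \<le> prob ?A + prob (space M - G)"
      using Aev Gev by (intro measure_subadditive) auto
    finally show ?thesis using nG eq by (simp add: mult.commute)
  qed
  have T: "tailF M \<xi> y > 0" for y using tail_pos .
  have trm: "ereal (prob (A2 M \<xi> h (tau \<xi>) y) / tailF M \<xi> y) \<le> ereal (1 / p) * ereal (prob (A2 M \<xi> h \<sigma> y) / tailF M \<xi> y)" for y
  proof -
    have "prob (A2 M \<xi> h (tau \<xi>) y) \<le> prob (A2 M \<xi> h \<sigma> y) / p"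
      using key[of y] p by (simp add: field_simps)
    then have "prob (A2 M \<xi> h (tau \<xi>) y) / tailF M \<xi> y \<le> (prob (A2 M \<xi> h \<sigma> y) / p) / tailF M \<xi> y"
      using T[of y] by (intro divide_right_mono) auto
    then show ?thesis by simp
  qed
  have up: "delta M \<xi> h (tau \<xi>) x \<le> ereal (1 / p) * delta M \<xi> h \<sigma> x" for x
    unfolding delta_def
  proof (rule SUP_least)
    fix y assume y: "y \<in> {x..}"
    have "ereal (prob (A2 M \<xi> h \<sigma> y) / tailF M \<xi> y) \<le> (SUP y\<in>{x..}. ereal (prob (A2 M \<xi> h \<sigma> y) / tailF M \<xi> y))"
      using y by (rule SUP_upper)
    then have "ereal (1 / p) * ereal (prob (A2 M \<xi> h \<sigma> y) / tailF M \<xi> y) \<le> ereal (1 / p) * (SUP y\<in>{x..}. ereal (prob (A2 M \<xi> h \<sigma> y) / tailF M \<xi> y))"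
      using p by (intro ereal_mult_left_mono) auto
    then show "ereal (prob (A2 M \<xi> h (tau \<xi>) y) / tailF M \<xi> y) \<le> ereal (1 / p) * (SUP y\<in>{x..}. ereal (prob (A2 M \<xi> h \<sigma> y) / tailF M \<xi> y))"
      using trm[of y] by (rule order_trans[rotated])
  qed
  have low: "0 \<le> delta M \<xi> h (tau \<xi>) x" for x
    unfolding delta_def
    by (rule SUP_upper2[of x]) (auto intro!: divide_nonneg_pos T)
  have lim: "((\<lambda>x. ereal (1 / p) * delta M \<xi> h \<sigma> x) \<longlongrightarrow> ereal (1 / p) * 0) at_top"
    by (rule tendsto_cmult_ereal[OF _ delta_sigma]) simp
  show ?thesis
    by (rule tendsto_sandwich[OF _ _ tendsto_const lim[simplified]]) (simp_all add: low up)
qed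

end
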